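(* Let $(K,C,S)$ be a layered simplicial complex and let $(K,C,S)\searrow(K-\{f,p\},C,S-\{f,p\})$ be an elementary $S$-collapse of a principal simplex $p\in S$ using the free face $f\in S$ of $p$. Then the freely orthogonal deformation retraction $H:|K|\times I\to|K|$ associated to $p$ and $f$ satisfies $H_t(|K|-|S|)=|K|-|S|$ and $H_t(|S|)\subseteq|S|$ for all $t\in I$.
   Context: A simplicial complex is a set of finite nonempty sets (simplices) closed under passing to nonempty subsets (faces); $|K|$ is its geometric realization and $|s|$ the closed geometric simplex. A simplex is principal in $K$ if it is not a proper face of any simplex of $K$; $f$ is free in $K$ if it is a proper face of a principal simplex $p$ and of no other simplex of $K$. A layered simplicial complex is $(K,C,S)$ with $C,S$ disjoint subcomplexes of $K$. An elementary $S$-collapse uses $p\in S$ principal in $K$ and a face $f$ of $p$ free in $K$. Freely orthogonal deformation retraction: let $p$ be principal in $K$ with free face $f$, let $v$ be the vertex of $p$ not in $f$ and $f_1,\dots,f_m$ the vertices of $f$ ($m\ge1$). Identify $|p|$ via barycentric coordinates with $\{x\in\mathbb R^m: x_i\ge0,\ \sum x_i\le1\}$ ($v\mapsto0$, $f_i\mapsto e_i$). Define $r:|p|\to|p|$ by $r(x)=(x_1-x_j,\dots,x_m-x_j)$ where $x_j=\min\{x_1,\dots,x_m\}$, and $H:|K|\times I\to|K|$ by $H(x,t)=(1-t)x+t\,r(x)$ for $x\in|p|$ and $H(x,t)=x$ for $x\in|K|-|p|$; $H_t=H(\cdot,t)$. *)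

theory Defs
  imports "HOL-Analysis.Analysis"
begin

definition simplicial_complex :: "'v set set \<Rightarrow> bool" where
  "simplicial_complex K \<longleftrightarrow>
     (\<forall>s\<in>K. finite s \<and> s \<noteq> {}) \<and> (\<forall>s\<in>K. \<forall>t. t \<subseteq> s \<and> t \<noteq> {} \<longrightarrow> t \<in> K)"

definition subcomplex :: "'v set set \<Rightarrow> 'v set set \<Rightarrow> bool" where
  "subcomplex L K \<longleftrightarrow> simplicial_complex L \<and> L \<subseteq> K"

definition layered_complex :: "'v set set \<Rightarrow> 'v set set \<Rightarrow> 'v set set \<Rightarrow> bool" where
  "layered_complex K C S \<longleftrightarrow>
     simplicial_complex K \<and> subcomplex C K \<and> subcomplex S K \<and> C \<inter> S = {}"

definition principal :: "'v set \<Rightarrow> 'v set set \<Rightarrow> bool" where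
  "principal p K \<longleftrightarrow> p \<in> K \<and> \<not> (\<exists>q\<in>K. p \<subset> q)"

definition free_face :: "'v set \<Rightarrow> 'v set set \<Rightarrow> bool" where
  "free_face f K \<longleftrightarrow> (\<exists>p. principal p K \<and> f \<subset> p \<and> (\<forall>q\<in>K. f \<subset> q \<longrightarrow> q = p))"

text \<open>Elementary S-collapse (K,C,S) to (K-{f,p},C,S-{f,p}) using the principal simplex
  p of S and its free face f of S (codimension one, as required for the retraction).\<close>
definition elementary_S_collapse ::
  "'v set set \<Rightarrow> 'v set set \<Rightarrow> 'v set set \<Rightarrow> 'v set \<Rightarrow> 'v set \<Rightarrow> bool" where
  "elementary_S_collapse K C S f p \<longleftrightarrow>
     layered_complex K C S \<and> p \<in> S \<and> f \<in> S \<and> principal p K \<and> f \<subset> p \<and>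
     free_face f K \<and> card p = card f + 1"

text \<open>Geometric realization via barycentric coordinates: points are functions 'v \<Rightarrow> real.\<close>
definition geom_simplex :: "'v set \<Rightarrow> ('v \<Rightarrow> real) set" where
  "geom_simplex s = {x. (\<forall>w. 0 \<le> x w) \<and> (\<forall>w. w \<notin> s \<longrightarrow> x w = 0) \<and> sum x s = 1}"

definition geom :: "'v set set \<Rightarrow> ('v \<Rightarrow> real) set" where
  "geom K = (\<Union>s\<in>K. geom_simplex s)"

definition fo_retract :: "'v set \<Rightarrow> 'v set \<Rightarrow> ('v \<Rightarrow> real) \<Rightarrow> ('v \<Rightarrow> real)" where
  "fo_retract p f x =
     (let m = Min (x ` f) in
      (\<lambda>w. if w \<in> f then x w - m
           else if w \<in> p then 1 - (\<Sum>u\<in>f. x u - m)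
           else 0))"

definition fo_homotopy :: "'v set \<Rightarrow> 'v set \<Rightarrow> ('v \<Rightarrow> real) \<Rightarrow> real \<Rightarrow> ('v \<Rightarrow> real)" where
  "fo_homotopy p f x t =
     (if x \<in> geom_simplex p then (\<lambda>w. (1 - t) * x w + t * fo_retract p f x w) else x)"

end

theory Submission
  imports Defs
begin

lemma geom_simplexI:
  assumes nn: "\<forall>w. 0 \<le> g w" and z: "\<forall>w. w \<notin> p \<longrightarrow> g w = 0" and s: "sum g p = 1"
  shows "g \<in> geom_simplex p"
  unfolding geom_simplex_def using nn z s by simp

lemma retract_in:
  assumes x: "x \<in> geom_simplex p" and fin: "finite p" and fp: "f \<subset> p" and fne: "f \<noteq> {}"
    and cp: "card p = card f + 1"
  shows "fo_retract p f x \<in> geom_simplex p"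
proof -
  have finf: "finite f" using fin fp finite_subset by blast
  have "card (p - f) = 1" using cp finf fp by (simp add: card_Diff_subset psubset_imp_subset)
  then obtain v where pv: "p - f = {v}" by (meson card_1_singletonE)
  hence vf: "v \<notin> f" and peq: "p = insert v f" using fp by auto
  define m where "m = Min (x ` f)"
  have x0: "\<And>w. 0 \<le> x w" and xz: "\<And>w. w \<notin> p \<Longrightarrow> x w = 0" and xs: "sum x p = 1"
    using x by (auto simp: geom_simplex_def)
  have mle: "\<And>u. u \<in> f \<Longrightarrow> m \<le> x u" unfolding m_def using finf by auto
  have m0: "0 \<le> m" unfolding m_def using finf fne x0 by (simp add: Min_ge_iff)
  have sx: "x v + sum x f = 1" using xs peq vf finf by simp
  have ssum: "(\<Sum>u\<in>f. x u - m) = sum x f - real (card f) * m"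
    by (simp add: sum_subtractf)
  have r: "fo_retract p f x = (\<lambda>w. if w \<in> f then x w - m
           else if w \<in> p then 1 - (\<Sum>u\<in>f. x u - m) else 0)"
    unfolding fo_retract_def m_def Let_def by simp
  have rv: "1 - (\<Sum>u\<in>f. x u - m) = x v + real (card f) * m" using ssum sx by simp
  have nn: "\<forall>w. 0 \<le> fo_retract p f x w"
  proof
    fix w show "0 \<le> fo_retract p f x w"
    proof (cases "w \<in> f")
      case True then show ?thesis unfolding r using mle[OF True] by simp
    next
      case False
      have "0 \<le> x v + real (card f) * m" using x0 m0 by simp
      then show ?thesis unfolding r using False rv by simp
    qed
  qed
  have sumr: "sum (fo_retract p f x) p = 1"
  proof -
    have e1: "sum (fo_retract p f x) p = fo_retract p f x v + sum (fo_retract p f x) f"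
      proof -
        have "\<And>g. sum g p = g v + sum g f" using peq vf finf by simp
        then show ?thesis by blast
      qed
    have e2: "sum (fo_retract p f x) f = (\<Sum>u\<in>f. x u - m)"
      unfolding r by (rule sum.cong) auto
    have e3: "fo_retract p f x v = 1 - (\<Sum>u\<in>f. x u - m)" unfolding r using vf peq by simp
    show ?thesis unfolding e1 e2 e3 by simp
  qed
  have z: "\<forall>w. w \<notin> p \<longrightarrow> fo_retract p f x w = 0" using fp unfolding r by auto
  show ?thesis by (rule geom_simplexI[OF nn z sumr])
qed

lemma hom_in:
  assumes x: "x \<in> geom_simplex p" and y: "y \<in> geom_simplex p" and t: "0 \<le> t" "t \<le> 1"
  shows "(\<lambda>w. (1 - t) * x w + t * y w) \<in> geom_simplex p"
proof -
  have "sum (\<lambda>w. (1 - t) * x w + t * y w) p = (1 - t) * sum x p + t * sum y p"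
    by (simp add: sum.distrib sum_distrib_left)
  then show ?thesis using x y t unfolding geom_simplex_def by simp
qed

theorem lemma5p3:
  fixes K C S :: "'v set set" and f p :: "'v set"
  assumes "elementary_S_collapse K C S f p"
  shows "\<forall>t\<in>{0..1::real}.
           (\<lambda>x. fo_homotopy p f x t) ` (geom K - geom S) = geom K - geom S \<and>
           (\<lambda>x. fo_homotopy p f x t) ` geom S \<subseteq> geom S"
proof
  fix t :: real assume t: "t \<in> {0..1}"
  have pS: "p \<in> S" and fS: "f \<in> S" and fp: "f \<subset> p" and cp: "card p = card f + 1"
    and sc: "simplicial_complex S"
    using assms by (auto simp: elementary_S_collapse_def layered_complex_def subcomplex_def)
  have fin: "finite p" and fne: "f \<noteq> {}" using sc pS fS unfolding simplicial_complex_def by blast+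
  have pg: "geom_simplex p \<subseteq> geom S" using pS by (auto simp: geom_def)
  have "(\<lambda>x. fo_homotopy p f x t) ` (geom K - geom S) = (\<lambda>x. x) ` (geom K - geom S)"
    by (rule image_cong) (use pg in \<open>auto simp: fo_homotopy_def\<close>)
  moreover have "(\<lambda>x. fo_homotopy p f x t) ` geom S \<subseteq> geom S"
  proof
    fix y assume "y \<in> (\<lambda>x. fo_homotopy p f x t) ` geom S"
    then obtain x where xS: "x \<in> geom S" and y: "y = fo_homotopy p f x t" by auto
    show "y \<in> geom S"
    proof (cases "x \<in> geom_simplex p")
      case True
      have "y \<in> geom_simplex p" unfolding y fo_homotopy_def using True t
        by (simp add: hom_in retract_in[OF True fin fp fne cp])
      then show ?thesis using pg by auto
    next
      case False then show ?thesis using xS y by (simp add: fo_homotopy_def)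
    qed
  qed
  ultimately show "(\<lambda>x. fo_homotopy p f x t) ` (geom K - geom S) = geom K - geom S \<and>
           (\<lambda>x. fo_homotopy p f x t) ` geom S \<subseteq> geom S" by simp
qed

end
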